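(* Let $X$ be a Hausdorff space without isolated points. If \textsc{Bob} has a winning strategy in the game $\mathsf{BM}_\mathrm{fin}(X)$, then \textsc{Bob} has a winning strategy in $\mathsf{BM}_\mathrm{fin}(X)$ in which every move $\mathcal{B}_n$ of \textsc{Bob} consists of pairwise disjoint sets.
   Context: The game $\mathsf{BM}_\mathrm{fin}(X)$ on a topological space $X$ is played by \textsc{Alice} and \textsc{Bob} as follows. \textsc{Alice} plays a non-empty open set $A_0$; \textsc{Bob} plays a finite collection $\mathcal{B}_0$ of non-empty open subsets of $A_0$. In inning $n+1$, for each $B \in \mathcal{B}_n$ \textsc{Alice} plays a non-empty open set $A_B \subseteq B$; let $\mathcal{A}_{n+1}=\{A_B : B\in\mathcal{B}_n\}$; then \textsc{Bob} plays a finite collection $\mathcal{B}_{n+1}$ of non-empty open subsets of $\bigcup\mathcal{A}_{n+1}$. Put $B_n=\bigcup\mathcal{B}_n$. \textsc{Bob} wins the play if $\bigcap_{n\in\omega}B_n\neq\emptyset$; otherwise \textsc{Alice} wins. A strategy for \textsc{Bob} is a function assigning a legal move of \textsc{Bob} to each finite sequence of previous moves of \textsc{Alice}; it is winning if \textsc{Bob} wins every play in which he follows it. *)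

theory Defs
  imports "HOL-Analysis.Analysis"
begin

text \<open>A history of Alice's moves is Alice's first move A0 together
with a list fs of her later moves; fs!k is her move in inning k+1, given as a function
assigning to each set B of Bob's previous move the set A_B.\<close>

type_synonym 'a bob_strategy = "'a set \<Rightarrow> ('a set \<Rightarrow> 'a set) list \<Rightarrow> 'a set set"

definition alice_legal :: "'a topology \<Rightarrow> 'a bob_strategy \<Rightarrow> 'a set \<Rightarrow> ('a set \<Rightarrow> 'a set) list \<Rightarrow> bool" where
  "alice_legal X \<sigma> A0 fs \<longleftrightarrow>
     openin X A0 \<and> A0 \<noteq> {} \<and>
     (\<forall>k < length fs. \<forall>B \<in> \<sigma> A0 (take k fs).
        openin X ((fs!k) B) \<and> (fs!k) B \<noteq> {} \<and> (fs!k) B \<subseteq> B)"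

definition bob_region :: "'a bob_strategy \<Rightarrow> 'a set \<Rightarrow> ('a set \<Rightarrow> 'a set) list \<Rightarrow> 'a set" where
  "bob_region \<sigma> A0 fs =
     (if fs = [] then A0 else \<Union>{(last fs) B | B. B \<in> \<sigma> A0 (butlast fs)})"

definition bob_legal_move :: "'a topology \<Rightarrow> 'a set \<Rightarrow> 'a set set \<Rightarrow> bool" where
  "bob_legal_move X S C \<longleftrightarrow> finite C \<and> (\<forall>B \<in> C. openin X B \<and> B \<noteq> {} \<and> B \<subseteq> S)"

definition bob_strategy :: "'a topology \<Rightarrow> 'a bob_strategy \<Rightarrow> bool" where
  "bob_strategy X \<sigma> \<longleftrightarrow>
     (\<forall>A0 fs. alice_legal X \<sigma> A0 fs \<longrightarrow> bob_legal_move X (bob_region \<sigma> A0 fs) (\<sigma> A0 fs))"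

text \<open>Bob wins every play following sigma: for every infinite sequence of legal moves of
Alice (alice n = her move in inning n+1), the intersection of the sets B_n is nonempty.\<close>
definition bob_winning :: "'a topology \<Rightarrow> 'a bob_strategy \<Rightarrow> bool" where
  "bob_winning X \<sigma> \<longleftrightarrow> bob_strategy X \<sigma> \<and>
     (\<forall>A0 (alice :: nat \<Rightarrow> 'a set \<Rightarrow> 'a set).
        (\<forall>n. alice_legal X \<sigma> A0 (map alice [0..<n])) \<longrightarrow>
        (\<Inter>n. \<Union>(\<sigma> A0 (map alice [0..<n]))) \<noteq> {})"

definition no_isolated_points :: "'a topology \<Rightarrow> bool" where
  "no_isolated_points X \<longleftrightarrow>
     (\<forall>x \<in> topspace X. \<forall>U. openin X U \<and> x \<in> U \<longrightarrow> (\<exists>y \<in> U. y \<noteq> x))"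

end

theory Submission
  imports Defs
begin

definition sh_ok :: "'a topology \<Rightarrow> 'a set set \<Rightarrow> ('a set \<Rightarrow> 'a set) \<Rightarrow> bool" where
  "sh_ok X C g \<longleftrightarrow> (\<forall>B\<in>C. g B \<subseteq> B \<and> openin X (g B) \<and> g B \<noteq> {} \<and>
      (\<forall>B'\<in>C. B \<noteq> B' \<longrightarrow> disjnt (g B) (g B')))"

definition sh :: "'a topology \<Rightarrow> 'a set set \<Rightarrow> 'a set \<Rightarrow> 'a set" where
  "sh X C = (SOME g. sh_ok X C g)"

lemma sh_exists:
  assumes H: "Hausdorff_space X" and N: "no_isolated_points X"
    and "finite C" and "\<forall>B\<in>C. openin X B \<and> B \<noteq> {}"
  shows "\<exists>g. sh_ok X C g"
  using assms(3,4)
proof (induction C rule: finite_induct)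
  case empty
  then show ?case by (auto simp: sh_ok_def)
next
  case (insert B0 C)
  then obtain g where g: "sh_ok X C g" by auto
  have B0: "openin X B0" "B0 \<noteq> {}" using insert by auto
  then obtain x0 where x0: "x0 \<in> B0" by auto
  have x0t: "x0 \<in> topspace X" using B0 x0 openin_subset by blast
  have "\<forall>B\<in>C. \<exists>y. y \<in> g B \<and> y \<noteq> x0"
  proof
    fix B assume "B \<in> C"
    then have gB: "openin X (g B)" "g B \<noteq> {}" using g by (auto simp: sh_ok_def)
    show "\<exists>y. y \<in> g B \<and> y \<noteq> x0"
    proof (cases "x0 \<in> g B")
      case True
      then show ?thesis using N gB x0t unfolding no_isolated_points_def by blast
    next
      case False
      then show ?thesis using gB by auto
    qed
  qed
  then obtain y where y: "\<forall>B\<in>C. y B \<in> g B \<and> y B \<noteq> x0" by metis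
  have "\<forall>B\<in>C. \<exists>U W. openin X U \<and> openin X W \<and> x0 \<in> U \<and> y B \<in> W \<and> disjnt U W"
  proof
    fix B assume B: "B \<in> C"
    then have "y B \<in> topspace X" using y g openin_subset unfolding sh_ok_def by blast
    then show "\<exists>U W. openin X U \<and> openin X W \<and> x0 \<in> U \<and> y B \<in> W \<and> disjnt U W"
      using H x0t y B unfolding Hausdorff_space_def by blast
  qed
  then obtain U W where UW: "\<forall>B\<in>C. openin X (U B) \<and> openin X (W B) \<and> x0 \<in> U B \<and> y B \<in> W B \<and> disjnt (U B) (W B)"
    by metis
  define V0 where "V0 = B0 \<inter> ((\<Inter>B\<in>C. U B) \<inter> topspace X)"
  have V0o: "openin X V0" unfolding V0_def using B0 UW insert(1) by (intro openin_Int openin_INT) auto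
  have V0x: "x0 \<in> V0" unfolding V0_def using x0 x0t UW by auto
  define g' where "g' = (\<lambda>B. if B = B0 then V0 else g B \<inter> W B)"
  have "sh_ok X (insert B0 C) g'"
    unfolding sh_ok_def
  proof (intro ballI conjI impI)
    fix B assume B: "B \<in> insert B0 C"
    show "g' B \<subseteq> B" using B insert(2) g unfolding g'_def V0_def sh_ok_def by auto
    show "openin X (g' B)" using B insert(2) g UW V0o unfolding g'_def sh_ok_def by auto
    show "g' B \<noteq> {}" using B insert(2) y UW V0x unfolding g'_def by auto
    fix B' assume B': "B' \<in> insert B0 C" and ne: "B \<noteq> B'"
    show "disjnt (g' B) (g' B')"
    proof (cases "B = B0")
      case True
      then have "B' \<in> C" using B' ne by auto
      then show ?thesis using True UW insert(2) unfolding g'_def V0_def disjnt_def by auto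
    next
      case False
      then have BC: "B \<in> C" using B by auto
      show ?thesis
      proof (cases "B' = B0")
        case True
        then show ?thesis using False BC UW insert(2) unfolding g'_def V0_def disjnt_def by auto
      next
        case F2: False
        then have "B' \<in> C" using B' by auto
        then show ?thesis using False F2 BC ne g unfolding g'_def sh_ok_def disjnt_def by auto
      qed
    qed
  qed
  then show ?case by blast
qed


lemma sh_good:
  assumes "Hausdorff_space X" "no_isolated_points X" "finite C" "\<forall>B\<in>C. openin X B \<and> B \<noteq> {}"
  shows "sh_ok X C (sh X C)"
  unfolding sh_def using sh_exists[OF assms] by (rule someI_ex)

primrec trf :: "'a topology \<Rightarrow> 'a bob_strategy \<Rightarrow> 'a set \<Rightarrow> (nat \<Rightarrow> 'a set \<Rightarrow> 'a set) \<Rightarrow> nat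
   \<Rightarrow> ('a set \<Rightarrow> 'a set) list" where
  "trf X \<sigma> A0 a 0 = []"
| "trf X \<sigma> A0 a (Suc n) = trf X \<sigma> A0 a n @ [\<lambda>B. a n (sh X (\<sigma> A0 (trf X \<sigma> A0 a n)) B)]"

definition newst :: "'a topology \<Rightarrow> 'a bob_strategy \<Rightarrow> 'a bob_strategy" where
  "newst X \<sigma> A0 fs = (let C = \<sigma> A0 (trf X \<sigma> A0 (nth fs) (length fs)) in sh X C ` C)"

lemma trf_cong: "(\<forall>k<n. a k = b k) \<Longrightarrow> trf X \<sigma> A0 a n = trf X \<sigma> A0 b n"
  by (induction n) auto

lemma trf_length[simp]: "length (trf X \<sigma> A0 a n) = n"
  by (induction n) auto

lemma newst_take:
  assumes "n \<le> length fs"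
  shows "newst X \<sigma> A0 (take n fs) = (let C = \<sigma> A0 (trf X \<sigma> A0 (nth fs) n) in sh X C ` C)"
proof -
  have "trf X \<sigma> A0 (nth (take n fs)) (length (take n fs)) = trf X \<sigma> A0 (nth fs) n"
    proof -
    have "length (take n fs) = n" using assms by simp
    moreover have "trf X \<sigma> A0 (nth (take n fs)) n = trf X \<sigma> A0 (nth fs) n" by (rule trf_cong) auto
    ultimately show ?thesis by simp
  qed
  then show ?thesis unfolding newst_def by simp
qed

lemma alice_legal_snoc:
  "alice_legal X \<sigma> A0 (xs @ [g]) \<longleftrightarrow> alice_legal X \<sigma> A0 xs \<and>
     (\<forall>B\<in>\<sigma> A0 xs. openin X (g B) \<and> g B \<noteq> {} \<and> g B \<subseteq> B)"
  unfolding alice_legal_def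
  by (auto simp: less_Suc_eq nth_append)

lemma trf_legal:
  assumes H: "Hausdorff_space X" "no_isolated_points X" and S: "bob_strategy X \<sigma>"
    and L: "alice_legal X (newst X \<sigma>) A0 fs"
  shows "n \<le> length fs \<Longrightarrow> alice_legal X \<sigma> A0 (trf X \<sigma> A0 (nth fs) n)"
proof (induction n)
  case 0
  then show ?case using L by (simp add: alice_legal_def)
next
  case (Suc n)
  define C where "C = \<sigma> A0 (trf X \<sigma> A0 (nth fs) n)"
  have IH: "alice_legal X \<sigma> A0 (trf X \<sigma> A0 (nth fs) n)" using Suc by simp
  then have "bob_legal_move X (bob_region \<sigma> A0 (trf X \<sigma> A0 (nth fs) n)) C"
    using S unfolding bob_strategy_def C_def by blast
  then have "finite C" "\<forall>B\<in>C. openin X B \<and> B \<noteq> {}" unfolding bob_legal_move_def by auto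
  then have ok: "sh_ok X C (sh X C)" using sh_good H by blast
  have nt: "newst X \<sigma> A0 (take n fs) = sh X C ` C" using newst_take[of n fs] Suc(2) C_def by (simp add: Let_def)
  have "\<forall>B'\<in>newst X \<sigma> A0 (take n fs). openin X ((fs!n) B') \<and> (fs!n) B' \<noteq> {} \<and> (fs!n) B' \<subseteq> B'"
    using L Suc(2) unfolding alice_legal_def by auto
  then have "\<forall>B\<in>C. openin X ((fs!n) (sh X C B)) \<and> (fs!n) (sh X C B) \<noteq> {} \<and> (fs!n) (sh X C B) \<subseteq> B"
    using ok nt unfolding sh_ok_def by blast
  then show ?case using IH by (simp add: alice_legal_snoc C_def)
qed

lemma trf_map: "trf X \<sigma> A0 a n = map (\<lambda>k B. a k (sh X (\<sigma> A0 (trf X \<sigma> A0 a k)) B)) [0..<n]"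
  by (induction n) auto

theorem lemma2p2:
  fixes X :: "'a topology"
  assumes "Hausdorff_space X"
    and "no_isolated_points X"
    and "\<exists>\<sigma>. bob_winning X \<sigma>"
  shows "\<exists>\<sigma>. bob_winning X \<sigma> \<and>
           (\<forall>A0 fs. alice_legal X \<sigma> A0 fs \<longrightarrow> pairwise disjnt (\<sigma> A0 fs))"
proof -
  obtain \<sigma> where W: "bob_winning X \<sigma>" using assms(3) by blast
  have S: "bob_strategy X \<sigma>" using W unfolding bob_winning_def by blast
  let ?t = "newst X \<sigma>"
  have key: "alice_legal X \<sigma> A0 (trf X \<sigma> A0 (nth fs) (length fs)) \<and>
      sh_ok X (\<sigma> A0 (trf X \<sigma> A0 (nth fs) (length fs))) (sh X (\<sigma> A0 (trf X \<sigma> A0 (nth fs) (length fs))))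
      \<and> bob_legal_move X (bob_region \<sigma> A0 (trf X \<sigma> A0 (nth fs) (length fs))) (\<sigma> A0 (trf X \<sigma> A0 (nth fs) (length fs)))"
    if L: "alice_legal X ?t A0 fs" for A0 fs
  proof -
    have a: "alice_legal X \<sigma> A0 (trf X \<sigma> A0 (nth fs) (length fs))"
      using trf_legal[OF assms(1,2) S L] by simp
    then have b: "bob_legal_move X (bob_region \<sigma> A0 (trf X \<sigma> A0 (nth fs) (length fs))) (\<sigma> A0 (trf X \<sigma> A0 (nth fs) (length fs)))"
      using S unfolding bob_strategy_def by blast
    then show ?thesis using a sh_good[OF assms(1,2)] unfolding bob_legal_move_def by blast
  qed
  have strat: "bob_strategy X ?t"
    unfolding bob_strategy_def
  proof (intro allI impI)
    fix A0 fs assume L: "alice_legal X ?t A0 fs"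
    define xs where "xs = trf X \<sigma> A0 (nth fs) (length fs)"
    define C where "C = \<sigma> A0 xs"
    have ok: "sh_ok X C (sh X C)" and bl: "bob_legal_move X (bob_region \<sigma> A0 xs) C"
      using key[OF L] unfolding xs_def C_def by auto
    have reg: "bob_region \<sigma> A0 xs \<subseteq> bob_region ?t A0 fs"
    proof (cases "fs = []")
      case True
      then show ?thesis unfolding xs_def bob_region_def by simp
    next
      case False
      then obtain m where m: "length fs = Suc m" by (cases fs) auto
      define D where "D = \<sigma> A0 (trf X \<sigma> A0 (nth fs) m)"
      have xs: "xs = trf X \<sigma> A0 (nth fs) m @ [\<lambda>B. (fs!m) (sh X D B)]"
        unfolding xs_def D_def m by simp
      have lf: "last fs = fs ! m" using m False by (simp add: last_conv_nth)
      have bf: "butlast fs = take m fs" using m by (simp add: butlast_conv_take)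
      have nt: "?t A0 (butlast fs) = sh X D ` D" using newst_take[of m fs] m bf D_def by (simp add: Let_def)
      show ?thesis unfolding bob_region_def using False xs lf nt D_def by auto
    qed
    have "?t A0 fs = sh X C ` C" unfolding newst_def C_def xs_def by (simp add: Let_def)
    then show "bob_legal_move X (bob_region ?t A0 fs) (?t A0 fs)"
    proof -
      have "\<forall>B\<in>C. sh X C B \<subseteq> bob_region ?t A0 fs"
        using ok bl reg unfolding bob_legal_move_def sh_ok_def by blast
      then show ?thesis using ok bl \<open>?t A0 fs = sh X C ` C\<close>
        unfolding bob_legal_move_def sh_ok_def by auto
    qed
  qed
  have disj: "pairwise disjnt (?t A0 fs)" if L: "alice_legal X ?t A0 fs" for A0 fs
  proof -
    define C where "C = \<sigma> A0 (trf X \<sigma> A0 (nth fs) (length fs))"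
    have ok: "sh_ok X C (sh X C)" using key[OF L] unfolding C_def by auto
    have "?t A0 fs = sh X C ` C" unfolding newst_def C_def by (simp add: Let_def)
    then show ?thesis using ok unfolding pairwise_def sh_ok_def by auto
  qed
  have win: "(\<Inter>n. \<Union>(?t A0 (map alice [0..<n]))) \<noteq> {}"
    if LL: "\<forall>n. alice_legal X ?t A0 (map alice [0..<n])" for A0 alice
  proof -
    define P where "P = trf X \<sigma> A0 alice"
    define beta where "beta = (\<lambda>k B. alice k (sh X (\<sigma> A0 (P k)) B))"
    have Pm: "P n = map beta [0..<n]" for n unfolding P_def beta_def by (rule trf_map)
    have Peq: "trf X \<sigma> A0 (nth (map alice [0..<m])) n = P n" if "n \<le> m" for n m
      unfolding P_def using that by (intro trf_cong) auto
    have tn: "?t A0 (map alice [0..<n]) = sh X (\<sigma> A0 (P n)) ` \<sigma> A0 (P n)" for n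
      unfolding newst_def using Peq[of n n] by (simp add: Let_def)
    have legP: "alice_legal X \<sigma> A0 (P n)" for n
      using key[OF LL[rule_format, of n]] Peq[of n n] by simp
    then have "\<forall>n. alice_legal X \<sigma> A0 (map beta [0..<n])" using Pm by simp
    then have "(\<Inter>n. \<Union>(\<sigma> A0 (map beta [0..<n]))) \<noteq> {}"
      using W unfolding bob_winning_def by blast
    then obtain x where "\<forall>n. x \<in> \<Union>(\<sigma> A0 (map beta [0..<n]))" by blast
    then have x: "\<And>n. x \<in> \<Union>(\<sigma> A0 (P n))" using Pm by simp
    have "x \<in> \<Union>(?t A0 (map alice [0..<n]))" for n
    proof -
      define C where "C = \<sigma> A0 (P n)"
      have "bob_legal_move X (bob_region \<sigma> A0 (P (Suc n))) (\<sigma> A0 (P (Suc n)))"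
        using S legP unfolding bob_strategy_def by blast
      then have "x \<in> bob_region \<sigma> A0 (P (Suc n))" using x[of "Suc n"] unfolding bob_legal_move_def by blast
      moreover have "P (Suc n) = P n @ [beta n]" using Pm by simp
      ultimately have "x \<in> \<Union>{beta n B | B. B \<in> C}" unfolding bob_region_def C_def by simp
      then obtain B where B: "B \<in> C" "x \<in> alice n (sh X C B)" unfolding beta_def C_def by auto
      have L1: "alice_legal X ?t A0 (map alice [0..<Suc n])" using LL by blast
      have tk: "take n (map alice [0..<Suc n]) = map alice [0..<n]" by (simp add: take_map)
      have "\<forall>B'\<in>?t A0 (map alice [0..<n]). alice n B' \<subseteq> B'"
        using L1 unfolding alice_legal_def using tk by (metis diff_zero le_refl length_map length_upt lessI nth_map_upt add_0)
      then have "alice n (sh X C B) \<subseteq> sh X C B" using tn[of n] B(1) C_def by blast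
      then show ?thesis using B tn[of n] C_def by blast
    qed
    then show ?thesis by blast
  qed
  show ?thesis
    apply (rule exI[of _ ?t])
    using strat disj win unfolding bob_winning_def by blast
qed

end
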